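(* The map $f$ is a bijection from the set of all permutations onto $\widehat{\mathcal{A}}$, with inverse $g$; that is, $f(g(w))=w$ for all $w\in\widehat{\mathcal{A}}$ and $g(f(\pi))=\pi$ for all permutations $\pi$.
   Context: A permutation of length $n\ge1$ is a word $\pi=\pi_1\cdots\pi_n$ containing each of $1,\dots,n$ exactly once. A descent of $\pi$ is an index $i$ with $\pi_i>\pi_{i+1}$. A run of $\pi$ is a maximal consecutive increasing sequence of letters; for a letter $c$ of $\pi$, $d_\pi(c)$ denotes the index of the run containing $c$, i.e. $1$ plus the number of descents at indices before the position of $c$. Words are finite sequences over the positive integers; $\max(w)$ is the largest letter of $w$. $\widehat{\mathcal{A}}$ is the set of words $w$ such that (AC1) every $i\in\{1,\dots,\max(w)\}$ occurs in $w$, and (AC2) for every $i\in\{1,\dots,\max(w)-1\}$, the rightmost occurrence of $i$ in $w$ is preceded by an occurrence of $i+1$. For a word $w$ and letter $j$, $p_w(j)$ is the list of positions $i$ with $w_i=j$, in increasing order. Define $f(\pi)=d_\pi(1)d_\pi(2)\cdots d_\pi(n)$ for a permutation $\pi$ of length $n$, and $g(w)$ to be the concatenation $p_w(1)p_w(2)\cdots p_w(\max(w))$ for $w\in\widehat{\mathcal{A}}$. *)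

theory Defs
  imports Main
begin

(* Words are lists of positive integers; positions and letters are 1-indexed:
   the i-th letter (1 <= i <= length w) is  w ! (i - 1). *)

definition is_perm :: "nat list \<Rightarrow> bool" where
  "is_perm \<pi> \<longleftrightarrow> length \<pi> \<ge> 1 \<and> distinct \<pi> \<and> set \<pi> = {1..length \<pi>}"

definition perms :: "nat list set" where
  "perms = {\<pi>. is_perm \<pi>}"

definition is_descent :: "nat list \<Rightarrow> nat \<Rightarrow> bool" where
  "is_descent \<pi> i \<longleftrightarrow> 1 \<le> i \<and> i < length \<pi> \<and> \<pi> ! (i - 1) > \<pi> ! i"

definition pos :: "nat list \<Rightarrow> nat \<Rightarrow> nat" where
  "pos \<pi> c = (LEAST i. 1 \<le> i \<and> i \<le> length \<pi> \<and> \<pi> ! (i - 1) = c)"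

definition run_idx :: "nat list \<Rightarrow> nat \<Rightarrow> nat" where
  "run_idx \<pi> c = 1 + card {i. i < pos \<pi> c \<and> is_descent \<pi> i}"

definition f_map :: "nat list \<Rightarrow> nat list" where
  "f_map \<pi> = map (run_idx \<pi>) [1..<length \<pi> + 1]"

definition maxw :: "nat list \<Rightarrow> nat" where
  "maxw w = Max (set w)"

definition positions :: "nat list \<Rightarrow> nat \<Rightarrow> nat list" where
  "positions w j = filter (\<lambda>i. w ! (i - 1) = j) [1..<length w + 1]"

definition g_map :: "nat list \<Rightarrow> nat list" where
  "g_map w = concat (map (positions w) [1..<maxw w + 1])"

(* the class \<hat>A: nonempty words over positive integers with (AC1), (AC2) *)
definition Ahat :: "nat list set" where
  "Ahat = {w. w \<noteq> [] \<and> 0 \<notin> set w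
      \<and> (\<forall>i \<in> {1..maxw w}. i \<in> set w)
      \<and> (\<forall>i \<in> {1..<maxw w}. \<exists>k l. 1 \<le> k \<and> k < l \<and> l \<le> length w
            \<and> w ! (k - 1) = i + 1 \<and> w ! (l - 1) = i
            \<and> (\<forall>m. l < m \<and> m \<le> length w \<longrightarrow> w ! (m - 1) \<noteq> i))}"

end

theory Submission
  imports Defs "HOL-Library.Product_Lexorder"
begin

lemma sorted_key_unique:
  fixes key :: "'a \<Rightarrow> 'b::linorder"
  assumes "sorted_wrt (<) (map key xs)" "sorted_wrt (<) (map key ys)" "set xs = set ys"
  shows "xs = ys"
proof -
  have d1: "sorted (map key xs)" "distinct (map key xs)" using assms(1) strict_sorted_iff by auto
  have d2: "sorted (map key ys)" "distinct (map key ys)" using assms(2) strict_sorted_iff by auto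
  have "map key xs = map key ys"
    by (rule sorted_distinct_set_unique) (use d1 d2 assms(3) in auto)
  moreover have "inj_on key (set xs \<union> set ys)" using d1(2) assms(3) by (simp add: distinct_map)
  ultimately show ?thesis by (rule map_inj_on)
qed

definition R :: "nat list \<Rightarrow> nat \<Rightarrow> nat" where
  "R \<pi> q = 1 + card {i. i < Suc q \<and> is_descent \<pi> i}"

lemma R_0: "R \<pi> 0 = 1"
  unfolding R_def is_descent_def by simp

lemma R_Suc: "R \<pi> (Suc q) = R \<pi> q + (if Suc q < length \<pi> \<and> \<pi>!q > \<pi>!(Suc q) then 1 else 0)"
proof -
  have e: "{i. i < Suc (Suc q) \<and> is_descent \<pi> i} = {i. i < Suc q \<and> is_descent \<pi> i}
     \<union> (if is_descent \<pi> (Suc q) then {Suc q} else {})" by (auto simp: less_Suc_eq)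
  have d: "is_descent \<pi> (Suc q) \<longleftrightarrow> Suc q < length \<pi> \<and> \<pi>!q > \<pi>!(Suc q)"
    unfolding is_descent_def by auto
  have f: "finite {i. i < Suc q \<and> is_descent \<pi> i}" by auto
  show ?thesis unfolding R_def e using d f by auto
qed

lemma R_mono1: "R \<pi> q \<le> R \<pi> (Suc q)" "R \<pi> (Suc q) \<le> Suc (R \<pi> q)"
  using R_Suc[of \<pi> q] by auto

lemma R_mono: "q1 \<le> q2 \<Longrightarrow> R \<pi> q1 \<le> R \<pi> q2"
  by (rule lift_Suc_mono_le[of "R \<pi>"]) (use R_mono1 in auto)

lemma pos_nth: "distinct \<pi> \<Longrightarrow> q < length \<pi> \<Longrightarrow> pos \<pi> (\<pi>!q) = Suc q"
  unfolding pos_def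
proof (rule Least_equality)
  assume "distinct \<pi>" "q < length \<pi>"
  then show "1 \<le> Suc q \<and> Suc q \<le> length \<pi> \<and> \<pi> ! (Suc q - 1) = \<pi> ! q" by auto
  fix y assume a: "1 \<le> y \<and> y \<le> length \<pi> \<and> \<pi> ! (y - 1) = \<pi> ! q"
  then have "y - 1 = q" using \<open>distinct \<pi>\<close> \<open>q < length \<pi>\<close> nth_eq_iff_index_eq by fastforce
  then show "Suc q \<le> y" using a by auto
qed

lemma run_idx_nth: "distinct \<pi> \<Longrightarrow> q < length \<pi> \<Longrightarrow> run_idx \<pi> (\<pi>!q) = R \<pi> q"
  unfolding run_idx_def R_def using pos_nth by simp

lemma f_map_nth: "c \<ge> 1 \<Longrightarrow> c \<le> length \<pi> \<Longrightarrow> f_map \<pi> ! (c - 1) = run_idx \<pi> c"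
  unfolding f_map_def by (subst nth_map) (auto simp del: upt_Suc)

lemma length_f_map[simp]: "length (f_map \<pi>) = length \<pi>"
  unfolding f_map_def by (simp del: upt_Suc)

lemma perm_nth_range: "is_perm \<pi> \<Longrightarrow> q < length \<pi> \<Longrightarrow> \<pi>!q \<ge> 1 \<and> \<pi>!q \<le> length \<pi>"
  unfolding is_perm_def using nth_mem by fastforce

lemma perm_surj: "is_perm \<pi> \<Longrightarrow> c \<ge> 1 \<Longrightarrow> c \<le> length \<pi> \<Longrightarrow> \<exists>q < length \<pi>. \<pi>!q = c"
  unfolding is_perm_def by (metis atLeastAtMost_iff in_set_conv_nth)

lemma f_map_perm_nth: "is_perm \<pi> \<Longrightarrow> q < length \<pi> \<Longrightarrow> f_map \<pi> ! (\<pi>!q - 1) = R \<pi> q"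
  using perm_nth_range f_map_nth run_idx_nth is_perm_def by metis

lemma perm_key_sorted:
  assumes "distinct \<pi>"
  shows "sorted_wrt (<) (map (\<lambda>q. (R \<pi> q, \<pi>!q)) [0..<length \<pi>])"
proof -
  have t: "transp ((<) :: nat \<times> nat \<Rightarrow> _ \<Rightarrow> bool)"
    by (rule transpI) (auto simp: less_prod_def)
  show ?thesis
  proof (subst sorted_wrt_iff_nth_Suc_transp[OF t], intro allI impI)
    fix i assume i: "Suc i < length (map (\<lambda>q. (R \<pi> q, \<pi> ! q)) [0..<length \<pi>])"
    then have i': "Suc i < length \<pi>" by simp
    have ne: "\<pi>!i \<noteq> \<pi>!Suc i" using assms i' nth_eq_iff_index_eq by fastforce
    show "map (\<lambda>q. (R \<pi> q, \<pi> ! q)) [0..<length \<pi>] ! i < map (\<lambda>q. (R \<pi> q, \<pi> ! q)) [0..<length \<pi>] ! Suc i"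
      using i' ne R_Suc[of \<pi> i] by (auto simp: less_prod_def)
  qed
qed


definition keyw :: "nat list \<Rightarrow> nat \<Rightarrow> nat \<times> nat" where
  "keyw w i = (w!(i-1), i)"

lemma vals_range:
  assumes "w \<noteq> []" "0 \<notin> set w" "x \<in> set w"
  shows "1 \<le> x \<and> x \<le> maxw w"
  using assms unfolding maxw_def by (metis Max_ge One_nat_def finite_set less_one not_le)

lemma set_positions: "set (positions w j) = {i. 1 \<le> i \<and> i \<le> length w \<and> w!(i-1) = j}"
  unfolding positions_def by auto

lemma set_g_map:
  assumes "w \<noteq> []" "0 \<notin> set w"
  shows "set (g_map w) = {1..length w}"
proof -
  have "set (g_map w) = (\<Union>j\<in>{1..maxw w}. {i. 1 \<le> i \<and> i \<le> length w \<and> w!(i-1) = j})"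
    unfolding g_map_def by (simp del: upt_Suc add: set_positions atLeastLessThanSuc_atLeastAtMost)
  also have "\<dots> = {1..length w}"
  proof (intro equalityI subsetI)
    fix i assume "i \<in> {1..length w}"
    then have "w!(i-1) \<in> set w" by auto
    then show "i \<in> (\<Union>j\<in>{1..maxw w}. {i. 1 \<le> i \<and> i \<le> length w \<and> w!(i-1) = j})"
      using vals_range[OF assms] \<open>i \<in> {1..length w}\<close> by auto
  qed auto
  finally show ?thesis .
qed

lemma sorted_positions: "sorted_wrt (<) (map (keyw w) (positions w j))"
proof -
  have "sorted_wrt (<) (positions w j)" unfolding positions_def
    by (rule sorted_wrt_filter) (simp del: upt_Suc)
  then have "sorted_wrt (\<lambda>x y. keyw w x < keyw w y) (positions w j)"
    by (rule sorted_wrt_mono_rel[rotated]) (auto simp: set_positions keyw_def)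
  then show ?thesis by (simp add: sorted_wrt_map)
qed

lemma sorted_g_aux: "sorted_wrt (<) (map (keyw w) (concat (map (positions w) [a..<b])))"
proof (induction b)
  case 0
  then show ?case by simp
next
  case (Suc b)
  show ?case
  proof (cases "a \<le> b")
    case True
    have "\<forall>x\<in>set (concat (map (positions w) [a..<b])). \<forall>y\<in>set (positions w b). keyw w x < keyw w y"
      by (auto simp: set_positions keyw_def)
    then show ?thesis using Suc.IH sorted_positions[of w b] True
      by (auto simp: sorted_wrt_append)
  next
    case False
    then show ?thesis by simp
  qed
qed

lemma sorted_g_map: "sorted_wrt (<) (map (keyw w) (g_map w))"
  unfolding g_map_def by (rule sorted_g_aux)


lemma f_map_ne: "is_perm \<pi> \<Longrightarrow> f_map \<pi> \<noteq> []"
  using length_f_map[of \<pi>] unfolding is_perm_def by (metis list.size(3) not_one_le_zero)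

lemma f_map_nz: "0 \<notin> set (f_map \<pi>)"
  unfolding f_map_def run_idx_def by auto

lemma map_keyw_f: assumes "is_perm \<pi>"
  shows "map (keyw (f_map \<pi>)) \<pi> = map (\<lambda>q. (R \<pi> q, \<pi>!q)) [0..<length \<pi>]"
  by (rule nth_equalityI) (use f_map_perm_nth[OF assms] in \<open>auto simp: keyw_def\<close>)

lemma g_f: assumes "is_perm \<pi>" shows "g_map (f_map \<pi>) = \<pi>"
proof (rule sorted_key_unique[where key = "keyw (f_map \<pi>)"])
  show "sorted_wrt (<) (map (keyw (f_map \<pi>)) (g_map (f_map \<pi>)))" by (rule sorted_g_map)
  show "sorted_wrt (<) (map (keyw (f_map \<pi>)) \<pi>)"
    unfolding map_keyw_f[OF assms] using perm_key_sorted assms is_perm_def by blast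
  show "set (g_map (f_map \<pi>)) = set \<pi>"
    using set_g_map[OF f_map_ne[OF assms] f_map_nz] assms unfolding is_perm_def by simp
qed

lemma set_f_map: assumes "is_perm \<pi>"
  shows "x \<in> set (f_map \<pi>) \<longleftrightarrow> (\<exists>q < length \<pi>. x = R \<pi> q)"
proof
  assume "x \<in> set (f_map \<pi>)"
  then obtain t where t: "t < length \<pi>" "x = f_map \<pi> ! t" by (auto simp: in_set_conv_nth)
  obtain q where q: "q < length \<pi>" "\<pi>!q = Suc t" using perm_surj[OF assms, of "Suc t"] t by auto
  have "x = R \<pi> q" using f_map_perm_nth[OF assms q(1)] q t by simp
  then show "\<exists>q < length \<pi>. x = R \<pi> q" using q by blast
next
  assume "\<exists>q < length \<pi>. x = R \<pi> q"
  then obtain q where q: "q < length \<pi>" "x = R \<pi> q" by blast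
  have "\<pi>!q - 1 < length \<pi>" using perm_nth_range[OF assms q(1)] by auto
  then show "x \<in> set (f_map \<pi>)" using f_map_perm_nth[OF assms q(1)] q
    by (metis length_f_map nth_mem)
qed

lemma R_ivt: "1 \<le> i \<Longrightarrow> i \<le> R \<pi> q \<Longrightarrow> \<exists>q' \<le> q. R \<pi> q' = i"
proof (induction q)
  case 0
  then show ?case using R_0[of \<pi>] by auto
next
  case (Suc q)
  show ?case
  proof (cases "i \<le> R \<pi> q")
    case True then show ?thesis using Suc by (meson le_Suc_eq)
  next
    case False then show ?thesis using Suc.prems R_mono1[of \<pi> q] by (intro exI[of _ "Suc q"]) auto
  qed
qed

lemma R_jump: "R \<pi> 0 \<le> i \<Longrightarrow> i < R \<pi> q \<Longrightarrow> \<exists>q'. q' < q \<and> R \<pi> q' \<le> i \<and> i < R \<pi> (Suc q')"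
proof (induction q)
  case 0 then show ?case by simp
next
  case (Suc q)
  show ?case
  proof (cases "i < R \<pi> q")
    case True then show ?thesis using Suc by (meson less_SucI)
  next
    case False then show ?thesis using Suc.prems by (intro exI[of _ q]) auto
  qed
qed

lemma f_Ahat: assumes "is_perm \<pi>" shows "f_map \<pi> \<in> Ahat"
proof -
  let ?w = "f_map \<pi>"
  let ?n = "length \<pi>"
  have n: "?n \<ge> 1" and dist: "distinct \<pi>" using assms is_perm_def by auto
  have mx: "maxw ?w = R \<pi> (?n - 1)"
    unfolding maxw_def
  proof (rule Max_eqI)
    have "?n - 1 < ?n" using n by simp
    then show "R \<pi> (?n - 1) \<in> set ?w" using set_f_map[OF assms] by blast
    fix y assume "y \<in> set ?w"
    then obtain q where "q < ?n" "y = R \<pi> q" using set_f_map[OF assms] by blast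
    then show "y \<le> R \<pi> (?n - 1)" using R_mono[of q "?n - 1" \<pi>] by simp
  qed simp
  have ac1: "\<forall>i \<in> {1..maxw ?w}. i \<in> set ?w"
  proof
    fix i assume "i \<in> {1..maxw ?w}"
    then obtain q where "q \<le> ?n - 1" "R \<pi> q = i" using R_ivt[of i \<pi> "?n - 1"] mx by auto
    moreover have "q < ?n" using \<open>q \<le> ?n - 1\<close> n by linarith
    ultimately show "i \<in> set ?w" using set_f_map[OF assms] by blast
  qed
  have sk: "sorted_wrt (<) (map (\<lambda>q. (R \<pi> q, \<pi>!q)) [0..<?n])" using perm_key_sorted dist by blast
  have ac2: "\<exists>k l. 1 \<le> k \<and> k < l \<and> l \<le> length ?w
            \<and> ?w ! (k - 1) = i + 1 \<and> ?w ! (l - 1) = i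
            \<and> (\<forall>m. l < m \<and> m \<le> length ?w \<longrightarrow> ?w ! (m - 1) \<noteq> i)" if i: "i \<in> {1..<maxw ?w}" for i
  proof -
    obtain q where q: "q < ?n - 1" "R \<pi> q \<le> i" "i < R \<pi> (Suc q)"
      using R_jump[of \<pi> i "?n - 1"] i mx R_0[of \<pi>] by auto
    have Rq: "R \<pi> q = i" "R \<pi> (Suc q) = i + 1" using q R_mono1[of \<pi> q] by auto
    have desc: "\<pi>!q > \<pi>!Suc q"
    proof (rule ccontr)
      assume "\<not> \<pi>!q > \<pi>!Suc q"
      then have "R \<pi> (Suc q) = R \<pi> q" unfolding R_Suc[of \<pi> q] by simp
      then show False using Rq by simp
    qed
    have q1: "q < ?n" "Suc q < ?n" using q by auto
    show ?thesis
    proof (intro exI conjI allI impI)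
      show "1 \<le> \<pi>!Suc q" "\<pi>!Suc q < \<pi>!q" "\<pi>!q \<le> length ?w"
        using perm_nth_range[OF assms q1(2)] perm_nth_range[OF assms q1(1)] desc by auto
      show "?w ! (\<pi>!Suc q - 1) = i + 1" "?w ! (\<pi>!q - 1) = i"
        using f_map_perm_nth[OF assms] q1 Rq by auto
      fix m assume m: "\<pi> ! q < m \<and> m \<le> length ?w"
      then obtain r where r: "r < ?n" "\<pi>!r = m" using perm_surj[OF assms, of m] by auto
      show "?w ! (m - 1) \<noteq> i"
      proof
        assume "?w ! (m - 1) = i"
        then have Rr: "R \<pi> r = i" using f_map_perm_nth[OF assms r(1)] r by simp
        consider "r < q" | "r = q" | "Suc q \<le> r" by linarith
        then show False
        proof cases
          case 1
          then have "(R \<pi> r, \<pi>!r) < (R \<pi> q, \<pi>!q)"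
            using sorted_wrt_nth_less[OF sk 1] q1 by simp
          then show False using Rr Rq m r by simp
        next
          case 2 then show False using m r by simp
        next
          case 3 then show False using R_mono[OF 3, of \<pi>] Rr Rq by simp
        qed
      qed
    qed
  qed
  show ?thesis unfolding Ahat_def mem_Collect_eq
  proof (intro conjI)
    show "\<forall>i\<in>{1..<maxw ?w}. \<exists>k l. 1 \<le> k \<and> k < l \<and> l \<le> length ?w
            \<and> ?w ! (k - 1) = i + 1 \<and> ?w ! (l - 1) = i
            \<and> (\<forall>m. l < m \<and> m \<le> length ?w \<longrightarrow> ?w ! (m - 1) \<noteq> i)"
      using ac2 by (rule ballI)
  qed (use f_map_ne[OF assms] f_map_nz ac1 in auto)
qed


lemma Ahat_D:
  assumes "w \<in> Ahat"
  shows "w \<noteq> []" "0 \<notin> set w" "\<And>i. 1 \<le> i \<Longrightarrow> i \<le> maxw w \<Longrightarrow> i \<in> set w"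
    "\<And>i. 1 \<le> i \<Longrightarrow> i < maxw w \<Longrightarrow> \<exists>k l. 1 \<le> k \<and> k < l \<and> l \<le> length w
            \<and> w ! (k - 1) = i + 1 \<and> w ! (l - 1) = i"
proof -
  show "w \<noteq> []" "0 \<notin> set w" "\<And>i. 1 \<le> i \<Longrightarrow> i \<le> maxw w \<Longrightarrow> i \<in> set w"
    using assms unfolding Ahat_def by auto
  fix i assume "1 \<le> i" "i < maxw w"
  then have "i \<in> {1..<maxw w}" by simp
  then show "\<exists>k l. 1 \<le> k \<and> k < l \<and> l \<le> length w
            \<and> w ! (k - 1) = i + 1 \<and> w ! (l - 1) = i"
    using assms unfolding Ahat_def mem_Collect_eq by blast
qed

lemma g_props:
  assumes "w \<in> Ahat"
  shows "distinct (g_map w)" "set (g_map w) = {1..length w}" "length (g_map w) = length w"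
    "is_perm (g_map w)"
proof -
  have "distinct (map (keyw w) (g_map w))" using sorted_g_map[of w] strict_sorted_iff by blast
  then show d: "distinct (g_map w)" using distinct_map by blast
  show s: "set (g_map w) = {1..length w}" using set_g_map Ahat_D[OF assms] by blast
  show l: "length (g_map w) = length w" using distinct_card[OF d] s by simp
  show "is_perm (g_map w)" unfolding is_perm_def using d s l Ahat_D(1)[OF assms]
    by (simp add: Suc_leI)
qed

lemma R_eq_K:
  assumes A: "w \<in> Ahat" and q: "q < length w"
  shows "R (g_map w) q = w ! (g_map w ! q - 1)"
proof -
  define \<pi> where "\<pi> = g_map w"
  define n where "n = length w"
  define K where "K q = w ! (\<pi> ! q - 1)" for q
  have len: "length \<pi> = n" unfolding \<pi>_def n_def using g_props[OF A] by simp
  have setp: "set \<pi> = {1..n}" unfolding \<pi>_def n_def using g_props[OF A] by simp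
  have S: "keyw w (\<pi>!q1) < keyw w (\<pi>!q2)" if "q1 < q2" "q2 < n" for q1 q2
    using sorted_wrt_nth_less[OF sorted_g_map[of w] that(1)] that len unfolding \<pi>_def by simp
  have Kmono: "K q1 \<le> K q2" if "q1 \<le> q2" "q2 < n" for q1 q2
    using S[of q1 q2] that unfolding K_def keyw_def by (cases "q1 = q2") auto
  have Keq: "\<pi>!q1 < \<pi>!q2" if "q1 < q2" "q2 < n" "K q1 = K q2" for q1 q2
    using S[of q1 q2] that unfolding K_def keyw_def by auto
  have surj: "\<exists>r<n. \<pi>!r = p" if "1 \<le> p" "p \<le> n" for p
    using that setp len by (metis atLeastAtMost_iff in_set_conv_nth)
  have prange: "1 \<le> \<pi>!r \<and> \<pi>!r \<le> n" if "r < n" for r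
    using that setp len nth_mem by fastforce
  have Kr: "1 \<le> K r \<and> K r \<le> maxw w" if "r < n" for r
  proof -
    have "\<pi>!r - 1 < length w" using prange[OF that] n_def by auto
    then have "K r \<in> set w" unfolding K_def by simp
    then show ?thesis using vals_range Ahat_D(1,2)[OF A] by blast
  qed
  have valpos: "\<exists>r<n. K r = v" if "1 \<le> v" "v \<le> maxw w" for v
  proof -
    have "v \<in> set w" using Ahat_D(3)[OF A] that by blast
    then obtain t where t: "t < n" "w!t = v" unfolding n_def by (auto simp: in_set_conv_nth)
    obtain r where r: "r < n" "\<pi>!r = Suc t" using surj[of "Suc t"] t by auto
    show ?thesis using r t unfolding K_def by auto
  qed
  have "R \<pi> q = K q" if "q < n" for q
    using that
  proof (induction q)
    case 0
    have "maxw w \<ge> 1" using Kr[OF 0] by simp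
    then obtain r where r: "r < n" "K r = 1" using valpos[of 1] by auto
    have "K 0 \<le> 1" using Kmono[of 0 r] r by simp
    then show ?case using Kr[OF 0] R_0[of \<pi>] by simp
  next
    case (Suc q)
    have q: "q < n" using Suc.prems by simp
    have IH: "R \<pi> q = K q" using Suc.IH q by simp
    have le: "K q \<le> K (Suc q)" using Kmono[of q "Suc q"] Suc.prems by simp
    show ?case
    proof (cases "K q = K (Suc q)")
      case True
      then have "\<pi>!q < \<pi>!Suc q" using Keq[of q "Suc q"] Suc.prems by simp
      then have "R \<pi> (Suc q) = R \<pi> q" unfolding R_Suc[of \<pi> q] by simp
      then show ?thesis using IH True by simp
    next
      case False
      define j where "j = K q"
      have lt: "j < K (Suc q)" using le False j_def by simp
      have jm: "1 \<le> j" "j < maxw w" using Kr[OF q] Kr[OF Suc.prems] lt j_def by auto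
      obtain r where r: "r < n" "K r = j + 1" using valpos[of "j+1"] jm by auto
      have "Suc q \<le> r"
      proof (rule ccontr)
        assume "\<not> Suc q \<le> r"
        then show False using Kmono[of r q] q r j_def by simp
      qed
      then have Ks: "K (Suc q) = j + 1" using Kmono[of "Suc q" r] r lt by simp
      obtain k l where kl: "1 \<le> k" "k < l" "l \<le> n" "w ! (k - 1) = j + 1" "w ! (l - 1) = j"
        using Ahat_D(4)[OF A jm] unfolding n_def by blast
      obtain rk where rk: "rk < n" "\<pi>!rk = k" using surj[of k] kl by auto
      obtain rl where rl: "rl < n" "\<pi>!rl = l" using surj[of l] kl by auto
      have Krk: "K rk = j + 1" using rk kl unfolding K_def by simp
      have Krl: "K rl = j" using rl kl unfolding K_def by simp
      have rk1: "Suc q \<le> rk"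
      proof (rule ccontr)
        assume "\<not> Suc q \<le> rk"
        then show False using Kmono[of rk q] q Krk j_def by simp
      qed
      have b: "\<pi>!Suc q \<le> k"
        using Keq[of "Suc q" rk] rk rk1 Krk Ks by (cases "Suc q = rk") auto
      have rl1: "rl \<le> q"
      proof (rule ccontr)
        assume "\<not> rl \<le> q"
        then show False using Kmono[of "Suc q" rl] rl Krl Ks by simp
      qed
      have a: "l \<le> \<pi>!q"
        using Keq[of rl q] rl rl1 Krl q j_def by (cases "rl = q") auto
      have "\<pi>!q > \<pi>!Suc q" using a b kl by simp
      then have "R \<pi> (Suc q) = R \<pi> q + 1" unfolding R_Suc[of \<pi> q] using Suc.prems len by simp
      then show ?thesis using IH Ks j_def by simp
    qed
  qed
  then show ?thesis using q unfolding \<pi>_def K_def n_def by simp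
qed

lemma f_g: assumes A: "w \<in> Ahat" shows "f_map (g_map w) = w"
proof (rule nth_equalityI)
  show "length (f_map (g_map w)) = length w" using g_props[OF A] by simp
  fix t assume "t < length (f_map (g_map w))"
  then have t: "t < length w" using g_props[OF A] by simp
  let ?\<pi> = "g_map w"
  obtain q where q: "q < length w" "?\<pi>!q = Suc t"
    using perm_surj[OF g_props(4)[OF A], of "Suc t"] t g_props(3)[OF A] by auto
  have "f_map ?\<pi> ! t = f_map ?\<pi> ! (?\<pi>!q - 1)" using q by simp
  also have "\<dots> = R ?\<pi> q" using f_map_perm_nth[OF g_props(4)[OF A], of q] q g_props(3)[OF A] by simp
  also have "\<dots> = w ! (?\<pi>!q - 1)" using R_eq_K[OF A q(1)] .
  finally show "f_map ?\<pi> ! t = w ! t" using q by simp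
qed

theorem mainTheorem2:
  shows "bij_betw f_map perms Ahat
    \<and> (\<forall>w \<in> Ahat. f_map (g_map w) = w)
    \<and> (\<forall>\<pi> \<in> perms. g_map (f_map \<pi>) = \<pi>)"
proof (intro conjI ballI)
  show "bij_betw f_map perms Ahat"
    by (rule bij_betw_byWitness[where f' = g_map])
       (auto simp: perms_def g_f f_g f_Ahat g_props)
  show "\<And>w. w \<in> Ahat \<Longrightarrow> f_map (g_map w) = w" by (rule f_g)
  show "\<And>\<pi>. \<pi> \<in> perms \<Longrightarrow> g_map (f_map \<pi>) = \<pi>" by (simp add: perms_def g_f)
qed

end
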